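(* Let $\mathcal{T}$ be a decision tree of depth $T$ whose edges are colored red and black such that every node has at most one outgoing black edge (edge to a child), and let $G$ be the maximum number of red edges on a root-to-leaf path. Then $\mathsf{WDT}(\mathcal{T})\le 3\sqrt{GT}$.
   Context: A decision tree is a finite rooted tree whose internal nodes each query a coordinate of the input (over a finite alphabet) and whose children correspond to distinct query outcomes; leaves carry outputs; its depth is the maximum number of edges on a root-to-leaf path. A weighting scheme for $\mathcal{T}$ is $w:V\to\mathbb{R}_{\ge0}$ such that $w_v=0$ for all leaves and, for every internal node $v$ with children $C_v$, there exist positive semidefinite $X,Y\in\mathbb{C}^{C_v\times C_v}$ with $X[c_1,c_2]-Y[c_1,c_2]=1$ for all distinct $c_1,c_2\in C_v$ and $w_v-w_c\ge X[c,c]+Y[c,c]$ for all $c\in C_v$. $\mathsf{WDT}(\mathcal{T})$ is the minimum of $w_{\mathrm{root}}$ over all weighting schemes. *)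

theory Defs
  imports "HOL-Analysis.Analysis"
begin

text \<open>An internal node queries input coordinate
  (a nat) and has a list of children, each labelled by the query outcome
  (of the alphabet type 'a) and by the colour of the edge to that child
  (True = black, False = red).\<close>

datatype ('a, 'o) dtree =
    Leaf 'o
  | Query nat "('a \<times> bool \<times> ('a, 'o) dtree) list"

fun children :: "('a, 'o) dtree \<Rightarrow> ('a \<times> bool \<times> ('a, 'o) dtree) list" where
  "children (Leaf _) = []"
| "children (Query _ cs) = cs"

fun is_leaf :: "('a, 'o) dtree \<Rightarrow> bool" where
  "is_leaf (Leaf _) = True"
| "is_leaf (Query _ _) = False"

fun wf_dtree :: "('a, 'o) dtree \<Rightarrow> bool" where
  "wf_dtree (Leaf _) = True"
| "wf_dtree (Query _ cs) =
     (cs \<noteq> [] \<and> distinct (map fst cs) \<and> (\<forall>c \<in> set cs. wf_dtree (snd (snd c))))"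

fun at_most_one_black :: "('a, 'o) dtree \<Rightarrow> bool" where
  "at_most_one_black (Leaf _) = True"
| "at_most_one_black (Query _ cs) =
     (length (filter (\<lambda>c. fst (snd c)) cs) \<le> 1 \<and> (\<forall>c \<in> set cs. at_most_one_black (snd (snd c))))"

fun depth :: "('a, 'o) dtree \<Rightarrow> nat" where
  "depth (Leaf _) = 0"
| "depth (Query _ cs) = Max (insert 0 ((\<lambda>c. Suc (depth (snd (snd c)))) ` set cs))"

fun red_depth :: "('a, 'o) dtree \<Rightarrow> nat" where
  "red_depth (Leaf _) = 0"
| "red_depth (Query _ cs) =
     Max (insert 0 ((\<lambda>c. (if fst (snd c) then 0 else 1) + red_depth (snd (snd c))) ` set cs))"

fun node_at :: "('a, 'o) dtree \<Rightarrow> nat list \<Rightarrow> ('a, 'o) dtree option" where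
  "node_at t [] = Some t"
| "node_at t (i # p) =
     (if i < length (children t) then node_at (snd (snd (children t ! i))) p else None)"

definition positions :: "('a, 'o) dtree \<Rightarrow> nat list set" where
  "positions t = {p. node_at t p \<noteq> None}"

definition psd :: "nat \<Rightarrow> (nat \<Rightarrow> nat \<Rightarrow> complex) \<Rightarrow> bool" where
  "psd k X \<longleftrightarrow>
     (\<forall>i<k. \<forall>j<k. X i j = cnj (X j i)) \<and>
     (\<forall>v :: nat \<Rightarrow> complex. 0 \<le> Re (\<Sum>i<k. \<Sum>j<k. cnj (v i) * X i j * v j))"

definition weighting_scheme :: "('a, 'o) dtree \<Rightarrow> (nat list \<Rightarrow> real) \<Rightarrow> bool" where
  "weighting_scheme t w \<longleftrightarrow>
     (\<forall>p \<in> positions t. 0 \<le> w p) \<and>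
     (\<forall>p \<in> positions t. is_leaf (the (node_at t p)) \<longrightarrow> w p = 0) \<and>
     (\<forall>p \<in> positions t. \<not> is_leaf (the (node_at t p)) \<longrightarrow>
        (let k = length (children (the (node_at t p))) in
         \<exists>X Y. psd k X \<and> psd k Y \<and>
           (\<forall>c1<k. \<forall>c2<k. c1 \<noteq> c2 \<longrightarrow> X c1 c2 - Y c1 c2 = 1) \<and>
           (\<forall>c<k. w p - w (p @ [c]) \<ge> Re (X c c + Y c c))))"

definition WDT :: "('a, 'o) dtree \<Rightarrow> real" where
  "WDT t = Inf {w [] | w. weighting_scheme t w}"

end

theory Submission
  imports Defs
begin
definition cst :: "real \<Rightarrow> bool \<Rightarrow> real" where
  "cst s b = (if b then s else 2 / s - 1)"
fun W :: "real \<Rightarrow> ('a, 'o) dtree \<Rightarrow> real" where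
  "W s (Leaf _) = 0"
| "W s (Query _ cs) = Max (insert 0 ((\<lambda>c. cst s (fst (snd c)) + W s (snd (snd c))) ` set cs))"
lemma depth_child: "c \<in> set cs \<Longrightarrow> Suc (depth (snd (snd c))) \<le> depth (Query q cs)"
  by (auto intro: Max_ge)

lemma red_depth_child: "c \<in> set cs \<Longrightarrow> (if fst (snd c) then 0 else 1) + red_depth (snd (snd c)) \<le> red_depth (Query q cs)"
  unfolding red_depth.simps by (rule Max_ge) auto
lemma a_nonneg: "0 < s \<Longrightarrow> (s::real) \<le> 1 \<Longrightarrow> 0 \<le> 2 / s - 1 - s"
proof -
  assume assms: "0 < s" "s \<le> 1"
  have "s * s \<le> s" using assms by (simp add: mult_left_le)
  then have "s * s \<le> 2 - s" using assms by linarith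
  then show ?thesis using assms by (simp add: field_simps) 
qed

lemma W_bound:
  "0 < s \<Longrightarrow> s \<le> 1 \<Longrightarrow> W s t \<le> s * depth t + (2 / s - 1 - s) * red_depth t"
proof (induction s t rule: W.induct)
  case (1 s x) then show ?case by simp
next
  case (2 s q cs)
  define a where "a = 2 / s - 1 - s"
  have a: "0 \<le> a" using a_nonneg 2 a_def by simp
  have rhs: "0 \<le> s * depth (Query q cs) + a * red_depth (Query q cs)"
    using a 2 by simp
  have el: "cst s (fst (snd c)) + W s (snd (snd c)) \<le> s * depth (Query q cs) + a * red_depth (Query q cs)"
    if c: "c \<in> set cs" for c
  proof -
    have ih: "W s (snd (snd c)) \<le> s * depth (snd (snd c)) + a * red_depth (snd (snd c))"
      using 2 c a_def by simp
    have d: "real (Suc (depth (snd (snd c)))) \<le> real (depth (Query q cs))"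
      using depth_child[OF c, of q] of_nat_le_iff by blast
    have r: "real ((if fst (snd c) then 0 else 1) + red_depth (snd (snd c))) \<le> real (red_depth (Query q cs))"
      using red_depth_child[OF c, of q] of_nat_le_iff by blast
    have cs: "cst s (fst (snd c)) = s + a * (if fst (snd c) then 0 else 1)"
      by (simp add: cst_def a_def)
    have "cst s (fst (snd c)) + W s (snd (snd c)) \<le> s * real (Suc (depth (snd (snd c))))
       + a * real ((if fst (snd c) then 0 else 1) + red_depth (snd (snd c)))"
      using ih cs by (simp add: algebra_simps)
    also have "\<dots> \<le> s * depth (Query q cs) + a * red_depth (Query q cs)"
      using d r a 2 by (intro add_mono mult_left_mono) auto
    finally show ?thesis .
  qed
  show ?case
    unfolding W.simps a_def[symmetric]
    using el rhs by (subst Max_le_iff) auto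
qed
lemma node_at_append: "node_at t (p @ q) = (case node_at t p of None \<Rightarrow> None | Some n \<Rightarrow> node_at n q)"
  by (induction p arbitrary: t) auto

lemma psd_rank1: "psd k (\<lambda>i j. complex_of_real (f i) * complex_of_real (f j))"
  unfolding psd_def
proof (intro conjI allI impI)
  fix v :: "nat \<Rightarrow> complex"
  have eq: "(\<Sum>i<k. \<Sum>j<k. cnj (v i) * (complex_of_real (f i) * complex_of_real (f j)) * v j)
        = cnj (\<Sum>i<k. complex_of_real (f i) * v i) * (\<Sum>j<k. complex_of_real (f j) * v j)"
    by (simp add: sum_product sum_distrib_left mult_ac)
  have r: "0 \<le> Re (cnj z * z)" for z :: complex
    by simp
  show "0 \<le> Re (\<Sum>i<k. \<Sum>j<k. cnj (v i) * (complex_of_real (f i) * complex_of_real (f j)) * v j)"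
    unfolding eq by (rule r)
qed (simp)

lemma amob_sub: "at_most_one_black t \<Longrightarrow> node_at t p = Some n \<Longrightarrow> at_most_one_black n"
proof (induction p arbitrary: t)
  case Nil then show ?case by simp
next
  case (Cons i p)
  then show ?case
  proof (cases t)
    case (Leaf x) then show ?thesis using Cons by simp
  next
    case (Query q cs)
    then show ?thesis using Cons by (auto split: if_splits) (metis nth_mem)
  qed
qed

lemma W_nonneg: "0 \<le> W s t"
  by (cases t) auto

lemma W_child: "c \<in> set cs \<Longrightarrow> cst s (fst (snd c)) + W s (snd (snd c)) \<le> W s (Query q cs)"
  by (auto intro: Max_ge)

lemma two_black:
  assumes "length (filter P xs) \<le> 1" "i < length xs" "j < length xs" "i \<noteq> j" "P (xs ! i)" "P (xs ! j)"
  shows False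
proof -
  have "{i, j} \<subseteq> {i. i < length xs \<and> P (xs ! i)}" using assms by auto
  then have "card {i, j} \<le> card {i. i < length xs \<and> P (xs ! i)}"
    by (rule card_mono[rotated]) auto
  then show False using assms by (simp add: length_filter_conv_card)
qed

lemma ws:
  assumes s: "0 < s" "s \<le> 1" and amob: "at_most_one_black t"
  shows "weighting_scheme t (\<lambda>p. W s (the (node_at t p)))"
  unfolding weighting_scheme_def
proof (intro conjI ballI impI)
  fix p assume "p \<in> positions t"
  show "0 \<le> W s (the (node_at t p))" by (rule W_nonneg)
next
  fix p assume "p \<in> positions t" "is_leaf (the (node_at t p))"
  then show "W s (the (node_at t p)) = 0" by (cases "the (node_at t p)") auto
next
  fix p assume pp: "p \<in> positions t" and nl: "\<not> is_leaf (the (node_at t p))"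
  then obtain n where n: "node_at t p = Some n" unfolding positions_def by auto
  then obtain q cs where ncs: "n = Query q cs" using nl by (cases n) auto
  have am: "at_most_one_black n" using amob_sub[OF amob n] .
  have one: "length (filter (\<lambda>c. fst (snd c)) cs) \<le> 1" using am ncs by simp
  have ch: "node_at t (p @ [c]) = Some (snd (snd (cs ! c)))" if "c < length cs" for c
    using n ncs that by (simp add: node_at_append)
  define f where "f i = (if fst (snd (cs ! i)) then sqrt s else 1 / sqrt s)" for i
  define g where "g i = (if fst (snd (cs ! i)) then 0 else sqrt (1 / s - 1))" for i
  have s1: "1 \<le> 1 / s" using s by simp
  show "let k = length (children (the (node_at t p))) in
         \<exists>X Y. psd k X \<and> psd k Y \<and>
           (\<forall>c1<k. \<forall>c2<k. c1 \<noteq> c2 \<longrightarrow> X c1 c2 - Y c1 c2 = 1) \<and>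
           (\<forall>c<k. W s (the (node_at t p)) - W s (the (node_at t (p @ [c]))) \<ge> Re (X c c + Y c c))"
    unfolding Let_def n ncs
  proof (intro exI conjI allI impI)
    show "psd (length (children (the (Some (Query q cs))))) (\<lambda>i j. complex_of_real (f i) * complex_of_real (f j))"
      by (rule psd_rank1)
    show "psd (length (children (the (Some (Query q cs))))) (\<lambda>i j. complex_of_real (g i) * complex_of_real (g j))"
      by (rule psd_rank1)
  next
    fix c1 c2 assume c1: "c1 < length (children (the (Some (Query q cs))))"
      and c2: "c2 < length (children (the (Some (Query q cs))))" and ne: "c1 \<noteq> c2"
    have c1': "c1 < length cs" and c2': "c2 < length cs" using c1 c2 by auto
    have nb: "\<not> (fst (snd (cs ! c1)) \<and> fst (snd (cs ! c2)))"
      using two_black[OF one c1' c2' ne] by auto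
    have ss: "sqrt s * (1 / sqrt s) = 1" using s by simp
    have ss2: "(1 / sqrt s) * (1 / sqrt s) = 1 / s" using s by (simp add: real_sqrt_mult[symmetric])
    have gg: "sqrt (1 / s - 1) * sqrt (1 / s - 1) = 1 / s - 1" using s1 by simp
    have "f c1 * f c2 - g c1 * g c2 = 1"
      using nb ss ss2 gg unfolding f_def g_def by (auto simp: mult.commute)
    then show "complex_of_real (f c1) * complex_of_real (f c2) - complex_of_real (g c1) * complex_of_real (g c2) = 1"
      by (metis of_real_1 of_real_diff of_real_mult)
  next
    fix c assume c: "c < length (children (the (Some (Query q cs))))"
    have c': "c < length cs" using c by simp
    have mem: "cs ! c \<in> set cs" using c' by simp
    have "f c * f c + g c * g c = cst s (fst (snd (cs ! c)))"
      using s s1 unfolding f_def g_def cst_def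
      by (auto simp: real_sqrt_mult[symmetric])
    then have "Re (complex_of_real (f c) * complex_of_real (f c) + complex_of_real (g c) * complex_of_real (g c))
        = cst s (fst (snd (cs ! c)))" by simp
    also have "\<dots> \<le> W s (Query q cs) - W s (snd (snd (cs ! c)))"
      using W_child[OF mem, of s q] by simp
    finally show "Re (complex_of_real (f c) * complex_of_real (f c) + complex_of_real (g c) * complex_of_real (g c))
        \<le> W s (the (Some (Query q cs))) - W s (the (node_at t (p @ [c])))"
      using ch[OF c'] by simp
  qed
qed
lemma WDT_le:
  fixes s :: real
  assumes s: "0 < s" "s \<le> 1" and amob: "at_most_one_black t"
  shows "WDT t \<le> W s t"
proof -
  let ?S = "{w [] | w. weighting_scheme t w}"
  have root: "[] \<in> positions t" unfolding positions_def by simp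
  have mem: "W s t \<in> ?S"
    using ws[OF s amob] by (intro CollectI exI[of _ "\<lambda>p. W s (the (node_at t p))"]) simp
  have bdd: "bdd_below ?S"
    unfolding bdd_below_def using root by (auto simp: weighting_scheme_def)
  show ?thesis unfolding WDT_def by (rule cInf_lower[OF mem bdd])
qed

lemma WDT_param:
  fixes s :: real
  assumes s: "0 < s" "s \<le> 1" and amob: "at_most_one_black t"
  shows "WDT t \<le> s * depth t + (2 / s - 1 - s) * red_depth t"
  using WDT_le[OF s amob] W_bound[OF s, of t] by linarith

theorem theorem6p4:
  fixes t :: "('a, 'o) dtree"
  assumes "wf_dtree t"
    and "at_most_one_black t"
  shows "WDT t \<le> 3 * sqrt (real (red_depth t) * real (depth t))"
proof -
  define G where "G = real (red_depth t)"
  define T where "T = real (depth t)"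
  have G0: "0 \<le> G" and T0: "0 \<le> T" unfolding G_def T_def by auto
  have P: "WDT t \<le> s * T + (2 / s - 1 - s) * G" if "0 < s" "s \<le> 1" for s
    using WDT_param[OF that assms(2)] unfolding G_def T_def .
  have main: "WDT t \<le> 3 * sqrt (G * T)"
  proof (cases "G = 0")
    case True
    have "WDT t \<le> 0"
    proof (rule ccontr)
      assume "\<not> WDT t \<le> 0"
      then have pos: "0 < WDT t" by simp
      define s where "s = min 1 (WDT t / (2 * (T + 1)))"
      have s0: "0 < s" "s \<le> 1" unfolding s_def using pos T0 by auto
      have "s * T \<le> WDT t / (2 * (T + 1)) * T"
        unfolding s_def using T0 by (intro mult_right_mono) auto
      also have "\<dots> < WDT t"
      proof -
        have "0 \<le> T * WDT t" using pos T0 by simp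
        have "0 < T * WDT t + WDT t * 2" using \<open>0 \<le> T * WDT t\<close> pos by linarith
        then show ?thesis using pos T0 by (simp add: field_simps)
      qed
      finally show False using P[OF s0] True by simp
    qed
    then show ?thesis using True by simp
  next
    case False
    then have Gp: "0 < G" using G0 by simp
    show ?thesis
    proof (cases "2 * G \<le> T")
      case True
      then have Tp: "0 < T" using Gp by simp
      define x where "x = sqrt (2 * G / T)"
      have x0: "0 < x" unfolding x_def using Gp Tp by simp
      have x1: "x \<le> 1" unfolding x_def using True Tp by simp
      have xx: "x * x = 2 * G / T" unfolding x_def using Gp Tp by simp
      have eq: "2 * G = x * x * T" using xx Tp by simp
      have "WDT t \<le> x * T + (2 / x - 1 - x) * G" using P[OF x0 x1] .
      also have "\<dots> \<le> x * T + 2 * G / x"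
        using x0 Gp by (simp add: algebra_simps)
      also have "2 * G / x = x * T" using eq x0 by (simp add: field_simps)
      also have "x * T + x * T = sqrt (8 * (G * T))"
      proof -
        have "(x * T + x * T)^2 = 8 * (G * T)"
          using eq by (simp add: power2_eq_square algebra_simps)
        then show ?thesis using x0 Tp
          by (metis add_nonneg_nonneg less_imp_le mult_nonneg_nonneg real_sqrt_unique)
      qed
      also have "\<dots> \<le> sqrt (9 * (G * T))" using Gp Tp by simp
      also have "\<dots> = 3 * sqrt (G * T)" by (simp add: real_sqrt_mult)
      finally show ?thesis .
    next
      case False
      have "WDT t \<le> 1 * T + (2 / 1 - 1 - 1) * G" using P[of 1] by simp
      also have "\<dots> = sqrt (T * T)" using T0 by simp
      also have "\<dots> \<le> sqrt (9 * (G * T))"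
      proof -
        have "T * T \<le> 2 * G * T" using False T0 by (intro mult_right_mono) auto
        also have "\<dots> \<le> 9 * (G * T)" using Gp T0 by simp
        finally show ?thesis using real_sqrt_le_mono by blast
      qed
      also have "\<dots> = 3 * sqrt (G * T)" by (simp add: real_sqrt_mult)
      finally show ?thesis .
    qed
  qed
  then show ?thesis unfolding G_def T_def .
qed
end
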